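(* Let $L\ge2$, $N\ge d_x$, $X_\epsilon$ of rank $d_x$, $\tilde W_{L:1}X=Y$, and $p=\min(d_x,d_y)$ (i.e. every hidden width $d_i$ is at least $\min(d_x,d_y)$). Then the end-to-end matrices of all global minimizers of $\mathcal L_{base}$ and of $\mathcal L_{st}$ coincide, both being equal to $YX_\epsilon^T(X_\epsilon X_\epsilon^T)^{-1}$.
   Context: Clean inputs $x_i\in\mathbb R^{d_x}$, targets $y_i\in\mathbb R^{d_y}$, noise $\epsilon_i\in\mathbb R^{d_x}$, $i=1,\dots,N$; $X\in\mathbb R^{d_x\times N}$ has columns $x_i$, $X_\epsilon$ has columns $x_i+\epsilon_i$, $Y\in\mathbb R^{d_y\times N}$ has columns $y_i$. A deep linear network with $L$ layers is a tuple $(W_L,\dots,W_1)$ with $W_i\in\mathbb R^{d_i\times d_{i-1}}$, $d_0=d_x$, $d_L=d_y$; $W_{i:j}:=W_iW_{i-1}\cdots W_j$; $p:=\min_{0\le i\le L}d_i$. Base loss: $\mathcal L_{base}(W_L,\dots,W_1)=\|W_{L:1}X_\epsilon-Y\|_F^2$. Fix $i^*\in\{1,\dots,L\}$, $\lambda>0$ and teacher weights $(\tilde W_L,\dots,\tilde W_1)$ of the same shapes; the student–teacher loss is $\mathcal L_{st}(W_L,\dots,W_1)=\|W_{L:1}X_\epsilon-Y\|_F^2+\lambda\|W_{i^*:1}X_\epsilon-\tilde W_{i^*:1}X\|_F^2$. *)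

theory Defs
  imports "Jordan_Normal_Form.Gauss_Jordan_Elimination" "Jordan_Normal_Form.DL_Rank"
begin

definition fro2 :: "real mat \<Rightarrow> real" where
  "fro2 A = (\<Sum>i<dim_row A. \<Sum>j<dim_col A. (A $$ (i, j))^2)"

text \<open>A deep linear network with L layers and widths d 0, ..., d L: layer i (1 \<le> i \<le> L)
  is a d i \<times> d (i-1) matrix.  Values W k for k outside 1..L are irrelevant.\<close>
definition valid_net :: "nat \<Rightarrow> (nat \<Rightarrow> nat) \<Rightarrow> (nat \<Rightarrow> real mat) \<Rightarrow> bool" where
  "valid_net L d W \<longleftrightarrow> (\<forall>i\<in>{1..L}. W i \<in> carrier_mat (d i) (d (i - 1)))"

text \<open>wprod W i j = W i * W (i-1) * ... * W j  (intended for j \<le> i).\<close>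
definition wprod :: "(nat \<Rightarrow> real mat) \<Rightarrow> nat \<Rightarrow> nat \<Rightarrow> real mat" where
  "wprod W i j = foldl (\<lambda>A k. A * W k) (W i) (rev [j..<i])"

definition loss_base :: "nat \<Rightarrow> real mat \<Rightarrow> real mat \<Rightarrow> (nat \<Rightarrow> real mat) \<Rightarrow> real" where
  "loss_base L Xe Y W = fro2 (wprod W L 1 * Xe - Y)"

definition loss_st ::
  "nat \<Rightarrow> nat \<Rightarrow> real \<Rightarrow> (nat \<Rightarrow> real mat) \<Rightarrow> real mat \<Rightarrow> real mat \<Rightarrow> real mat
     \<Rightarrow> (nat \<Rightarrow> real mat) \<Rightarrow> real" where
  "loss_st L istar lam Wt X Xe Y W =
     fro2 (wprod W L 1 * Xe - Y) + lam * fro2 (wprod W istar 1 * Xe - wprod Wt istar 1 * X)"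

definition global_min :: "nat \<Rightarrow> (nat \<Rightarrow> nat) \<Rightarrow> ((nat \<Rightarrow> real mat) \<Rightarrow> real)
    \<Rightarrow> (nat \<Rightarrow> real mat) \<Rightarrow> bool" where
  "global_min L d f W \<longleftrightarrow> valid_net L d W \<and> (\<forall>V. valid_net L d V \<longrightarrow> f W \<le> f V)"

end

theory Submission
  imports Defs
begin

lemma (in vec_space) full_rank_span:
  assumes A: "A \<in> carrier_mat n nc" and r: "rank A = n"
  shows "span (set (cols A)) = carrier_vec n"
proof -
  have cA: "set (cols A) \<subseteq> carrier_vec n" using A cols_dim by blast
  have li0: "lin_indpt {}"
    by (metis (no_types) empty_subsetI fin_dim finite_basis_exists subset_li_is_li vec_vs vectorspace.basis_def)
  obtain U where U: "finite U" "maximal U (\<lambda>T. T \<subseteq> set (cols A) \<and> lin_indpt T)"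
    using maximal_exists_superset[of "set (cols A)" "\<lambda>T. T \<subseteq> set (cols A) \<and> lin_indpt T" "{}"] li0
    by auto
  have Us: "U \<subseteq> set (cols A)" "lin_indpt U" using U(2) unfolding maximal_def by auto
  have "card U = n" using rank_card_indpt[OF A U(2)] r by simp
  have Uc: "U \<subseteq> carrier_vec n" using Us cA by auto
  have "basis U" using dim_li_is_basis[OF fin_dim U(1)] Uc Us \<open>card U = n\<close> dim_is_n by auto
  then have "span U = carrier_vec n" unfolding basis_def by auto
  moreover have "span U \<subseteq> span (set (cols A))" using span_is_monotone Us by metis
  moreover have "span (set (cols A)) \<subseteq> carrier_vec n" using cA by auto
  ultimately show ?thesis by auto
qed

lemma (in vec_space) full_rank_orth:
  assumes A: "A \<in> carrier_mat n nc" and r: "rank A = n" and v: "v \<in> carrier_vec n"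
    and o: "\<forall>y \<in> set (cols A). v \<bullet> y = 0"
  shows "v \<bullet> v = 0"
proof -
  have "v \<in> orthogonal_complement (set (cols A))"
    using v o unfolding orthogonal_complement_def by auto
  also have "\<dots> = orthogonal_complement (span (set (cols A)))"
    using in_orthogonal_complement_span[of "set (cols A)"] A cols_dim by blast
  also have "span (set (cols A)) = carrier_vec n"
    using full_rank_span[OF A r] .
  finally show "v \<bullet> v = 0" using v unfolding orthogonal_complement_def by auto
qed

lemma self_scalar_zero:
  fixes v :: "real vec"
  assumes "v \<bullet> v = 0" shows "v = 0\<^sub>v (dim_vec v)"
proof -
  have "(\<Sum>i\<in>{0..<dim_vec v}. v $ i * v $ i) = 0" using assms unfolding scalar_prod_def by simp
  then have "\<forall>i\<in>{0..<dim_vec v}. v $ i * v $ i = 0"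
    by (subst (asm) sum_nonneg_eq_0_iff) auto
  then have "\<And>i. i < dim_vec v \<Longrightarrow> v $ i = 0" by simp
  then show ?thesis by (intro eq_vecI) simp_all
qed

lemma gram_det:
  fixes A :: "real mat"
  assumes A: "A \<in> carrier_mat n nc" and r: "vec_space.rank n A = n"
  shows "det (A * transpose_mat A) \<noteq> 0"
proof
  assume d: "det (A * transpose_mat A) = 0"
  have G: "A * transpose_mat A \<in> carrier_mat n n" using A by auto
  obtain v where v: "v \<in> carrier_vec n" "v \<noteq> 0\<^sub>v n" "(A * transpose_mat A) *\<^sub>v v = 0\<^sub>v n"
    using det_0_iff_vec_prod_zero_field[OF G] d by auto
  define w where "w = transpose_mat A *\<^sub>v v"
  have AT: "transpose_mat A \<in> carrier_mat nc n" using A by simp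
  have w: "w \<in> carrier_vec nc" unfolding w_def using mult_mat_vec_carrier[OF AT v(1)] .
  have "A *\<^sub>v w = 0\<^sub>v n" unfolding w_def
    using assoc_mult_mat_vec[OF A AT v(1)] v(3) by simp
  moreover have "w \<bullet> w = v \<bullet> (A *\<^sub>v w)"
    using transpose_vec_mult_scalar[OF A w v(1)] unfolding w_def .
  ultimately have "w \<bullet> w = 0" using v(1) by simp
  then have w0: "w = 0\<^sub>v nc" using self_scalar_zero[of w] carrier_vecD[OF w] by metis
  have "\<forall>y \<in> set (cols A). v \<bullet> y = 0"
  proof
    fix y assume "y \<in> set (cols A)"
    then obtain j where j: "j < nc" "y = col A j" using A by (auto simp: cols_def)
    have "w $ j = col A j \<bullet> v" unfolding w_def using A j by auto
    then show "v \<bullet> y = 0" using w0 j comm_scalar_prod[OF v(1), of y] A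
      by (simp add: col_def)
  qed
  then have "v \<bullet> v = 0" using vec_space.full_rank_orth[OF A r v(1)] by blast
  then show False using self_scalar_zero[of v] carrier_vecD[OF v(1)] v(2) by metis
qed


definition inner_m :: "real mat \<Rightarrow> real mat \<Rightarrow> real" where
  "inner_m A B = (\<Sum>i<dim_row A. \<Sum>j<dim_col A. A $$ (i, j) * B $$ (i, j))"

lemma fro2_nonneg: "fro2 A \<ge> 0"
  unfolding fro2_def by (intro sum_nonneg) auto

lemma fro2_zero:
  assumes A: "A \<in> carrier_mat m n" and z: "fro2 A = 0"
  shows "A = 0\<^sub>m m n"
proof -
  have "\<forall>i\<in>{..<m}. (\<Sum>j<n. (A $$ (i, j))^2) = 0"
    using z A unfolding fro2_def by (subst (asm) sum_nonneg_eq_0_iff) (auto intro: sum_nonneg)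
  then have "\<And>i j. i < m \<Longrightarrow> j < n \<Longrightarrow> (A $$ (i, j))^2 = 0"
    by (subst (asm) sum_nonneg_eq_0_iff) auto
  then show ?thesis using A by (intro eq_matI) auto
qed

lemma fro2_add:
  assumes P: "P \<in> carrier_mat m n" and Q: "Q \<in> carrier_mat m n"
  shows "fro2 (P + Q) = fro2 P + fro2 Q + 2 * inner_m P Q"
  using P Q unfolding fro2_def inner_m_def
  by (simp add: power2_sum sum.distrib sum_distrib_left mult.assoc)

lemma inner_mult:
  assumes D: "D \<in> carrier_mat m n" and X: "X \<in> carrier_mat n k" and Q: "Q \<in> carrier_mat m k"
  shows "inner_m (D * X) Q = inner_m D (Q * transpose_mat X)"
proof -
  have "inner_m (D * X) Q = (\<Sum>i<m. \<Sum>j<k. (\<Sum>l<n. D $$ (i, l) * X $$ (l, j)) * Q $$ (i, j))"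
    unfolding inner_m_def using D X Q
    by (intro sum.cong refl) (auto simp: scalar_prod_def atLeast0LessThan)
  also have "\<dots> = (\<Sum>i<m. \<Sum>j<k. \<Sum>l<n. D $$ (i, l) * (X $$ (l, j) * Q $$ (i, j)))"
    by (simp add: sum_distrib_right mult.assoc)
  also have "\<dots> = (\<Sum>i<m. \<Sum>l<n. \<Sum>j<k. D $$ (i, l) * (X $$ (l, j) * Q $$ (i, j)))"
    by (intro sum.cong refl sum.swap)
  also have "\<dots> = (\<Sum>i<m. \<Sum>l<n. D $$ (i, l) * (\<Sum>j<k. Q $$ (i, j) * X $$ (l, j)))"
    by (simp add: sum_distrib_left mult.commute)
  also have "\<dots> = inner_m D (Q * transpose_mat X)"
    unfolding inner_m_def using D X Q
    by (intro sum.cong refl) (auto simp: scalar_prod_def atLeast0LessThan)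
  finally show ?thesis .
qed

lemma ls_pythag:
  fixes Xe T M Gi :: "real mat"
  assumes Xe: "Xe \<in> carrier_mat n N" and T: "T \<in> carrier_mat m N" and Gi: "Gi \<in> carrier_mat n n"
    and GiG: "Gi * (Xe * transpose_mat Xe) = 1\<^sub>m n"
    and M: "M \<in> carrier_mat m n"
  shows "fro2 (M * Xe - T) = fro2 ((M - T * transpose_mat Xe * Gi) * Xe) + fro2 (T * transpose_mat Xe * Gi * Xe - T)"
proof -
  define Ws where "Ws = T * transpose_mat Xe * Gi"
  have XeT: "transpose_mat Xe \<in> carrier_mat N n" using Xe by simp
  have Ws: "Ws \<in> carrier_mat m n" unfolding Ws_def using T Xe Gi by auto
  have G: "Xe * transpose_mat Xe \<in> carrier_mat n n" using Xe by auto
  have WsG: "Ws * (Xe * transpose_mat Xe) = T * transpose_mat Xe"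
  proof -
    have "Ws * (Xe * transpose_mat Xe) = (T * transpose_mat Xe) * (Gi * (Xe * transpose_mat Xe))"
      unfolding Ws_def by (rule assoc_mult_mat[OF mult_carrier_mat[OF T XeT] Gi G])
    also have "\<dots> = T * transpose_mat Xe" using GiG T XeT
      by (metis mult_carrier_mat right_mult_one_mat)
    finally show ?thesis .
  qed
  have key: "(Ws * Xe - T) * transpose_mat Xe = 0\<^sub>m m n"
  proof -
    have "(Ws * Xe - T) * transpose_mat Xe = Ws * Xe * transpose_mat Xe - T * transpose_mat Xe"
      using Ws Xe T XeT by (intro minus_mult_distrib_mat) auto
    also have "Ws * Xe * transpose_mat Xe = Ws * (Xe * transpose_mat Xe)"
      using Ws Xe XeT by simp
    finally show ?thesis using WsG T XeT by (intro eq_matI) auto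
  qed
  have D: "M - Ws \<in> carrier_mat m n" using minus_carrier_mat[OF Ws] .
  have P: "(M - Ws) * Xe \<in> carrier_mat m N" using D Xe by simp
  have Q: "Ws * Xe - T \<in> carrier_mat m N" using minus_carrier_mat[OF T] .
  have split: "M * Xe - T = (M - Ws) * Xe + (Ws * Xe - T)"
  proof -
    have "(M - Ws) * Xe = M * Xe - Ws * Xe" using M Ws Xe by (rule minus_mult_distrib_mat)
    then show ?thesis using M Ws Xe T by (intro eq_matI) auto
  qed
  have "inner_m ((M - Ws) * Xe) (Ws * Xe - T) = inner_m (M - Ws) (0\<^sub>m m n)"
    using inner_mult[OF D Xe Q] key by simp
  also have "\<dots> = 0" unfolding inner_m_def using Ws by (intro sum.neutral ballI) auto
  finally have "inner_m ((M - Ws) * Xe) (Ws * Xe - T) = 0" .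
  then show ?thesis unfolding split fro2_add[OF P Q] Ws_def[symmetric] by simp
qed

lemma ls_unique:
  fixes Xe M Ws Gi :: "real mat"
  assumes Xe: "Xe \<in> carrier_mat n N" and Gi: "Gi \<in> carrier_mat n n"
    and GGi: "(Xe * transpose_mat Xe) * Gi = 1\<^sub>m n"
    and M: "M \<in> carrier_mat m n" and Ws: "Ws \<in> carrier_mat m n"
    and z: "fro2 ((M - Ws) * Xe) = 0"
  shows "M = Ws"
proof -
  have D: "M - Ws \<in> carrier_mat m n" using minus_carrier_mat[OF Ws] .
  have XeT: "transpose_mat Xe \<in> carrier_mat N n" using Xe by simp
  have "(M - Ws) * Xe = 0\<^sub>m m N" using fro2_zero[OF _ z] D Xe by simp
  then have "(M - Ws) * Xe * transpose_mat Xe * Gi = 0\<^sub>m m n"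
    using XeT Gi by simp
  moreover have "(M - Ws) * Xe * transpose_mat Xe * Gi = (M - Ws) * ((Xe * transpose_mat Xe) * Gi)"
    using assoc_mult_mat[OF D Xe XeT] assoc_mult_mat[OF D mult_carrier_mat[OF Xe XeT] Gi] by simp
  ultimately have "M - Ws = 0\<^sub>m m n" using GGi right_mult_one_mat[OF D] by simp
  show ?thesis
  proof (rule eq_matI)
    fix i j assume ij: "i < dim_row Ws" "j < dim_col Ws"
    have "(M - Ws) $$ (i, j) = 0" using \<open>M - Ws = 0\<^sub>m m n\<close> ij Ws by simp
    then show "M $$ (i, j) = Ws $$ (i, j)" using ij M Ws by simp
  qed (use M Ws in auto)
qed



lemma foldl_carrier:
  assumes W: "valid_net L d W" and j: "1 \<le> j"
  shows "j \<le> i \<Longrightarrow> i \<le> L + 1 \<Longrightarrow> A \<in> carrier_mat r (d (i - 1)) \<Longrightarrow>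
    foldl (\<lambda>A k. A * W k) A (rev [j..<i]) \<in> carrier_mat r (d (j - 1))"
proof (induction i arbitrary: A)
  case 0
  then show ?case using j by simp
next
  case (Suc i)
  show ?case
  proof (cases "j = Suc i")
    case True
    then show ?thesis using Suc.prems by simp
  next
    case False
    then have ji: "j \<le> i" using Suc.prems by simp
    have Wi: "W i \<in> carrier_mat (d i) (d (i - 1))"
      using W ji j Suc.prems unfolding valid_net_def by auto
    have "A * W i \<in> carrier_mat r (d (i - 1))" using Suc.prems(3) Wi by simp
    then have "foldl (\<lambda>A k. A * W k) (A * W i) (rev [j..<i]) \<in> carrier_mat r (d (j - 1))"
      using Suc.IH ji Suc.prems(2) by simp
    then show ?thesis using ji by simp
  qed
qed

lemma wprod_carrier:
  assumes W: "valid_net L d W" and "1 \<le> j" "j \<le> i" "i \<le> L"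
  shows "wprod W i j \<in> carrier_mat (d i) (d (j - 1))"
proof -
  have "W i \<in> carrier_mat (d i) (d (i - 1))" using W assms unfolding valid_net_def by auto
  then show ?thesis unfolding wprod_def using foldl_carrier[OF W assms(2,3)] assms by simp
qed

lemma wprod_mod:
  assumes W: "valid_net L d Wt" and S: "S \<in> carrier_mat (d 0) (d 0)"
    and V: "V = Wt(1 := Wt 1 * S)" and i: "1 \<le> i" "i \<le> L"
  shows "wprod V i 1 = wprod Wt i 1 * S"
proof (cases "i = 1")
  case True
  then show ?thesis using V unfolding wprod_def by simp
next
  case False
  then have i2: "2 \<le> i" using i by simp
  have l: "rev [1..<i] = rev [2..<i] @ [1]" using i2 by (simp add: upt_conv_Cons numeral_2_eq_2)
  define P where "P = foldl (\<lambda>A k. A * Wt k) (Wt i) (rev [2..<i])"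
  have PV: "foldl (\<lambda>A k. A * V k) (V i) (rev [2..<i]) = P"
    unfolding P_def using V i2 by (intro foldl_cong) auto
  have Wi: "Wt i \<in> carrier_mat (d i) (d (i - 1))" using W i unfolding valid_net_def by auto
  have P: "P \<in> carrier_mat (d i) (d 1)"
    unfolding P_def using foldl_carrier[OF W, of 2 i] Wi i2 i by simp
  have W1: "Wt 1 \<in> carrier_mat (d 1) (d 0)" using W i unfolding valid_net_def
    by (metis atLeastAtMost_iff diff_self_eq_0 le_trans order_refl)
  have "wprod V i 1 = P * (Wt 1 * S)" unfolding wprod_def l using PV V by simp
  also have "\<dots> = P * Wt 1 * S" using P W1 S by simp
  also have "P * Wt 1 = wprod Wt i 1" unfolding wprod_def l P_def by simp
  finally show ?thesis .
qed


lemma assoc3: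
  fixes B X XT Gi :: "real mat"
  assumes "B \<in> carrier_mat m n" "X \<in> carrier_mat n N" "XT \<in> carrier_mat N n" "Gi \<in> carrier_mat n n"
  shows "B * (X * XT * Gi) = B * X * XT * Gi"
proof -
  have "B * (X * XT * Gi) = B * (X * XT) * Gi"
    using assoc_mult_mat[OF assms(1) mult_carrier_mat[OF assms(2,3)] assms(4)] by simp
  also have "B * (X * XT) = B * X * XT" using assoc_mult_mat[OF assms(1,2,3)] by simp
  finally show ?thesis .
qed

theorem mainTheorem7:
  fixes L N istar :: nat and d :: "nat \<Rightarrow> nat" and lam :: real
    and X E Y :: "real mat" and Wt :: "nat \<Rightarrow> real mat"
  defines "Xe \<equiv> X + E"
  assumes "L \<ge> 2"
    and "X \<in> carrier_mat (d 0) N" and "E \<in> carrier_mat (d 0) N" and "Y \<in> carrier_mat (d L) N"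
    and "N \<ge> d 0"
    and "vec_space.rank (d 0) Xe = d 0"
    and "valid_net L d Wt"
    and "wprod Wt L 1 * X = Y"
    and "istar \<in> {1..L}" and "lam > 0"
    and "Min (d ` {0..L}) = min (d 0) (d L)"
  shows "(\<forall>W. global_min L d (loss_base L Xe Y) W \<longrightarrow>
            wprod W L 1 = Y * transpose_mat Xe * the (mat_inverse (Xe * transpose_mat Xe)))
       \<and> (\<forall>W. global_min L d (loss_st L istar lam Wt X Xe Y) W \<longrightarrow>
            wprod W L 1 = Y * transpose_mat Xe * the (mat_inverse (Xe * transpose_mat Xe)))"
proof -
  note X = assms(3) and Ecar = assms(4) and Y = assms(5) and rk = assms(7) and Wt = assms(8)
    and WtY = assms(9) and ist = assms(10) and lam = assms(11)
  have Xe: "Xe \<in> carrier_mat (d 0) N" unfolding Xe_def using X Ecar by simp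
  have XeT: "transpose_mat Xe \<in> carrier_mat N (d 0)" using Xe by simp
  have G: "Xe * transpose_mat Xe \<in> carrier_mat (d 0) (d 0)" using Xe by simp
  have detG: "det (Xe * transpose_mat Xe) \<noteq> 0" using gram_det[OF Xe rk] .
  have U: "Xe * transpose_mat Xe \<in> Units (ring_mat TYPE(real) (d 0) ())"
    using det_non_zero_imp_unit[OF G detG] .
  have "mat_inverse (Xe * transpose_mat Xe) \<noteq> None"
  proof
    assume "mat_inverse (Xe * transpose_mat Xe) = None"
    from mat_inverse(1)[OF G this, of "()"] U show False by simp
  qed
  then obtain Gi where Gi_eq: "mat_inverse (Xe * transpose_mat Xe) = Some Gi" by blast
  have GiP: "Xe * transpose_mat Xe * Gi = 1\<^sub>m (d 0) \<and> Gi * (Xe * transpose_mat Xe) = 1\<^sub>m (d 0)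
      \<and> Gi \<in> carrier_mat (d 0) (d 0)"
    using mat_inverse(2)[OF G Gi_eq] .
  then have GGi: "Xe * transpose_mat Xe * Gi = 1\<^sub>m (d 0)"
    and GiG: "Gi * (Xe * transpose_mat Xe) = 1\<^sub>m (d 0)"
    and Gi: "Gi \<in> carrier_mat (d 0) (d 0)" by auto
  define Ws where "Ws = Y * transpose_mat Xe * Gi"
  have the_eq: "Y * transpose_mat Xe * the (mat_inverse (Xe * transpose_mat Xe)) = Ws"
    unfolding Ws_def Gi_eq by simp
  have Ws: "Ws \<in> carrier_mat (d L) (d 0)" unfolding Ws_def using Y XeT Gi by simp
  define S where "S = X * transpose_mat Xe * Gi"
  have S: "S \<in> carrier_mat (d 0) (d 0)" unfolding S_def using X XeT Gi by simp
  define V where "V = Wt(1 := Wt 1 * S)"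
  have L1: "1 \<le> L" using assms(2) by simp
  have W1: "Wt 1 \<in> carrier_mat (d 1) (d 0)" using Wt L1 unfolding valid_net_def
    by (metis atLeastAtMost_iff diff_self_eq_0 order_refl)
  have V: "valid_net L d V"
    unfolding valid_net_def
  proof
    fix i assume i: "i \<in> {1..L}"
    show "V i \<in> carrier_mat (d i) (d (i - 1))"
    proof (cases "i = 1")
      case True then show ?thesis unfolding V_def using W1 S by simp
    next
      case False then show ?thesis unfolding V_def using Wt i unfolding valid_net_def by simp
    qed
  qed
  have BL: "wprod Wt L 1 \<in> carrier_mat (d L) (d 0)" using wprod_carrier[OF Wt, of 1 L] L1 by simp
  have VL: "wprod V L 1 = Ws"
  proof -
    have "wprod V L 1 = wprod Wt L 1 * S" using wprod_mod[OF Wt S V_def L1 order_refl] .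
    also have "\<dots> = wprod Wt L 1 * X * transpose_mat Xe * Gi"
      unfolding S_def using assoc3[OF BL X XeT Gi] .
    finally show ?thesis unfolding Ws_def WtY .
  qed
  have ist1: "1 \<le> istar" "istar \<le> L" using ist by auto
  define Bt where "Bt = wprod Wt istar 1"
  have Bt: "Bt \<in> carrier_mat (d istar) (d 0)" unfolding Bt_def using wprod_carrier[OF Wt, of 1 istar] ist1 by simp
  define T2 where "T2 = Bt * X"
  have T2: "T2 \<in> carrier_mat (d istar) N" unfolding T2_def using Bt X by simp
  define Ws2 where "Ws2 = T2 * transpose_mat Xe * Gi"
  have Vi: "wprod V istar 1 = Ws2"
  proof -
    have "wprod V istar 1 = Bt * S" unfolding Bt_def using wprod_mod[OF Wt S V_def ist1] .
    also have "\<dots> = Bt * X * transpose_mat Xe * Gi"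
      unfolding S_def using assoc3[OF Bt X XeT Gi] .
    finally show ?thesis unfolding Ws2_def T2_def .
  qed
  have base_part: "wprod W L 1 = Ws" if "valid_net L d W" and le: "fro2 (wprod W L 1 * Xe - Y) + c \<le> fro2 (Ws * Xe - Y)"
    and c: "c \<ge> 0" for W c
  proof -
    have M: "wprod W L 1 \<in> carrier_mat (d L) (d 0)" using wprod_carrier[OF that(1), of 1 L] L1 by simp
    have "fro2 (wprod W L 1 * Xe - Y) = fro2 ((wprod W L 1 - Ws) * Xe) + fro2 (Ws * Xe - Y)"
      unfolding Ws_def using ls_pythag[OF Xe Y Gi GiG M] .
    then have "fro2 ((wprod W L 1 - Ws) * Xe) = 0"
      using le c fro2_nonneg[of "(wprod W L 1 - Ws) * Xe"] by linarith
    then show ?thesis using ls_unique[OF Xe Gi GGi M Ws] by blast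
  qed
  show ?thesis unfolding the_eq
  proof (intro conjI allI impI)
    fix W assume gm: "global_min L d (loss_base L Xe Y) W"
    then have vW: "valid_net L d W" and "loss_base L Xe Y W \<le> loss_base L Xe Y V"
      using V unfolding global_min_def by auto
    then have "fro2 (wprod W L 1 * Xe - Y) + 0 \<le> fro2 (Ws * Xe - Y)"
      unfolding loss_base_def VL by simp
    then show "wprod W L 1 = Ws" using base_part[OF vW, of 0] by simp
  next
    fix W assume gm: "global_min L d (loss_st L istar lam Wt X Xe Y) W"
    then have vW: "valid_net L d W" and le: "loss_st L istar lam Wt X Xe Y W \<le> loss_st L istar lam Wt X Xe Y V"
      using V unfolding global_min_def by auto
    have A: "wprod W istar 1 \<in> carrier_mat (d istar) (d 0)" using wprod_carrier[OF vW, of 1 istar] ist1 by simp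
    have pA: "fro2 (wprod W istar 1 * Xe - T2) = fro2 ((wprod W istar 1 - Ws2) * Xe) + fro2 (Ws2 * Xe - T2)"
      unfolding Ws2_def using ls_pythag[OF Xe T2 Gi GiG A] .
    have "fro2 (wprod W L 1 * Xe - Y) + lam * fro2 (wprod W istar 1 * Xe - T2)
        \<le> fro2 (Ws * Xe - Y) + lam * fro2 (Ws2 * Xe - T2)"
      using le unfolding loss_st_def VL Vi T2_def Bt_def .
    then have "fro2 (wprod W L 1 * Xe - Y) + lam * fro2 ((wprod W istar 1 - Ws2) * Xe) \<le> fro2 (Ws * Xe - Y)"
      unfolding pA by (simp add: algebra_simps)
    moreover have "lam * fro2 ((wprod W istar 1 - Ws2) * Xe) \<ge> 0"
      using lam fro2_nonneg by simp
    ultimately show "wprod W L 1 = Ws" using base_part[OF vW] by blast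
  qed
qed

thm_deps mainTheorem7

end
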